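(* Let $b\ge 1$, $d=b+1$, $n=2b$, and let $f,g:\mathbb{F}_2^d\to\mathbb{F}_2$ be nonlinear bipermutive local rules whose no-boundary CA $F,G:\mathbb{F}_2^{2b}\to\mathbb{F}_2^b$ form a pair of orthogonal CA, with superposition S-box $H:\mathbb{F}_2^n\to\mathbb{F}_2^n$. Let $v=(v_1,\dots,v_n)\in\mathbb{F}_2^n\setminus\{\underline 0\}$ with $nl(v\cdot H)=0$. (i) If $v_b=v_n=0$, then the right shift $v'=(0,v_1,\dots,v_{n-1})$ satisfies $nl(v'\cdot H)=0$. (ii) If $v_1=v_{b+1}=0$, then the left shift $v'=(v_2,\dots,v_n,0)$ satisfies $nl(v'\cdot H)=0$.
   Context: A local rule $f:\mathbb{F}_2^d\to\mathbb{F}_2$ is bipermutive if $f(x_1,\dots,x_d)=x_1\oplus\varphi(x_2,\dots,x_{d-1})\oplus x_d$ for some $\varphi:\mathbb{F}_2^{d-2}\to\mathbb{F}_2$; it is nonlinear if its algebraic degree is at least 2. With $b=d-1$, the no-boundary CA of $f$ is $F:\mathbb{F}_2^{2b}\to\mathbb{F}_2^b$, $F(x)_i=f(x_i,\dots,x_{i+b})$, $i=1,\dots,b$; it defines the $2^b\times 2^b$ Latin square with entry $F(x\|y)$ at row $x$, column $y$ ($x,y\in\mathbb{F}_2^b$, $\|$ = concatenation). $F,G$ with bipermutive rules of equal diameter are orthogonal if $(x,y)\mapsto(F(x\|y),G(x\|y))$ is a bijection of $\mathbb{F}_2^b\times\mathbb{F}_2^b$. The superposition S-box is $H(x)=F(x)\|G(x)$,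 i.e. $H(x)_i=f(x_i,\dots,x_{i+b})$, $H(x)_{b+i}=g(x_i,\dots,x_{i+b})$ for $i=1,\dots,b$. The component function is $v\cdot H(x)=\bigoplus_i v_iH(x)_i$, and $nl(h)$ is the minimum Hamming distance of $h$ to the affine Boolean functions ($nl(h)=0$ iff $h$ is affine). *)

theory Defs
  imports Main
begin

text \<open>F_2 is modelled by bool (addition = xor, i.e. \<noteq>; multiplication = \<and>).
  Vectors of F_2^m are bool lists of length m; the paper's 1-based coordinate
  x_i is the list entry x ! (i-1).\<close>

definition vecs :: "nat \<Rightarrow> bool list set" where
  "vecs m = {xs. length xs = m}"

definition dotp :: "bool list \<Rightarrow> bool list \<Rightarrow> bool" where
  "dotp u w = odd (card {i. i < length u \<and> u ! i \<and> w ! i})"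

definition affine_fun :: "nat \<Rightarrow> bool list \<Rightarrow> bool \<Rightarrow> bool list \<Rightarrow> bool" where
  "affine_fun m a c = (\<lambda>x. c \<noteq> dotp a x)"

definition hdist :: "nat \<Rightarrow> (bool list \<Rightarrow> bool) \<Rightarrow> (bool list \<Rightarrow> bool) \<Rightarrow> nat" where
  "hdist m h k = card {x \<in> vecs m. h x \<noteq> k x}"

definition nl :: "nat \<Rightarrow> (bool list \<Rightarrow> bool) \<Rightarrow> nat" where
  "nl m h = Min {hdist m h (affine_fun m a c) | a c. a \<in> vecs m}"

text \<open>Algebraic degree via the algebraic normal form: the ANF coefficient of the
  monomial x^u is the xor of h(x) over all x \<le> u (componentwise).\<close>

definition below :: "bool list \<Rightarrow> bool list \<Rightarrow> bool" where
  "below x u = (\<forall>i < length x. x ! i \<longrightarrow> u ! i)"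

definition anf_coeff :: "nat \<Rightarrow> (bool list \<Rightarrow> bool) \<Rightarrow> bool list \<Rightarrow> bool" where
  "anf_coeff m h u = odd (card {x \<in> vecs m. below x u \<and> h x})"

definition hweight :: "bool list \<Rightarrow> nat" where
  "hweight u = card {i. i < length u \<and> u ! i}"

definition alg_deg :: "nat \<Rightarrow> (bool list \<Rightarrow> bool) \<Rightarrow> nat" where
  "alg_deg m h = Max (insert 0 {hweight u | u. u \<in> vecs m \<and> anf_coeff m h u})"

definition nonlinear :: "nat \<Rightarrow> (bool list \<Rightarrow> bool) \<Rightarrow> bool" where
  "nonlinear d f = (alg_deg d f \<ge> 2)"

definition bipermutive :: "nat \<Rightarrow> (bool list \<Rightarrow> bool) \<Rightarrow> bool" where
  "bipermutive d f = (\<exists>\<phi> :: bool list \<Rightarrow> bool. \<forall>x \<in> vecs d.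
      f x = ((x ! 0 \<noteq> \<phi> (take (d - 2) (drop 1 x))) \<noteq> x ! (d - 1)))"

definition nbca :: "nat \<Rightarrow> (bool list \<Rightarrow> bool) \<Rightarrow> bool list \<Rightarrow> bool list" where
  "nbca b f x = map (\<lambda>i. f (take (b + 1) (drop i x))) [0..<b]"

definition orthogonal_ca :: "nat \<Rightarrow> (bool list \<Rightarrow> bool) \<Rightarrow> (bool list \<Rightarrow> bool) \<Rightarrow> bool" where
  "orthogonal_ca b f g = bij_betw (\<lambda>(x, y). (nbca b f (x @ y), nbca b g (x @ y)))
      (vecs b \<times> vecs b) (vecs b \<times> vecs b)"

definition sbox :: "nat \<Rightarrow> (bool list \<Rightarrow> bool) \<Rightarrow> (bool list \<Rightarrow> bool) \<Rightarrow> bool list \<Rightarrow> bool list" where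
  "sbox b f g x = nbca b f x @ nbca b g x"

end

theory Submission
  imports Defs
begin

definition xs :: "nat \<Rightarrow> (nat \<Rightarrow> bool) \<Rightarrow> bool" where
  "xs n P = odd (card {i. i < n \<and> P i})"

lemma xs_0[simp]: "xs 0 P = False" by (simp add: xs_def)

lemma xs_Suc: "xs (Suc n) P = (xs n P \<noteq> P n)"
proof -
  have e: "{i. i < Suc n \<and> P i} = {i. i < n \<and> P i} \<union> (if P n then {n} else {})"
    by (auto simp: less_Suc_eq)
  show ?thesis unfolding xs_def e by auto
qed

lemma xs_cong: "(\<And>i. i < n \<Longrightarrow> P i = Q i) \<Longrightarrow> xs n P = xs n Q"
  unfolding xs_def by (rule arg_cong[where f="\<lambda>S. odd (card S)"]) auto

lemma xs_shift: "xs (Suc n) P = (P 0 \<noteq> xs n (\<lambda>i. P (Suc i)))"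
  by (induction n) (auto simp: xs_Suc)

lemma xs_add: "xs (m + n) P = (xs m P \<noteq> xs n (\<lambda>i. P (m + i)))"
  by (induction n) (auto simp: xs_Suc)

lemma dotp_xs: "dotp u w = xs (length u) (\<lambda>i. u ! i \<and> w ! i)"
  by (simp add: dotp_def xs_def)

lemma finite_vecs: "finite (vecs m)"
proof -
  have "vecs m = {l. set l \<subseteq> (UNIV::bool set) \<and> length l = m}" by (auto simp: vecs_def)
  thus ?thesis using finite_lists_length_eq[of "UNIV::bool set" m] by simp
qed

lemma nl_zero_iff: "nl m h = 0 \<longleftrightarrow> (\<exists>a c. a \<in> vecs m \<and> (\<forall>x\<in>vecs m. h x = (c \<noteq> dotp a x)))"
proof -
  let ?S = "{hdist m h (affine_fun m a c) | a c. a \<in> vecs m}"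
  have sub: "?S \<subseteq> (\<lambda>p. hdist m h (affine_fun m (fst p) (snd p))) ` (vecs m \<times> UNIV)"
  proof
    fix y assume "y \<in> ?S"
    then obtain a c where y: "y = hdist m h (affine_fun m a c)" "a \<in> vecs m" by blast
    show "y \<in> (\<lambda>p. hdist m h (affine_fun m (fst p) (snd p))) ` (vecs m \<times> UNIV)"
      using y by (intro image_eqI[of _ _ "(a,c)"]) auto
  qed
  have fin: "finite ?S" using finite_vecs by (intro finite_subset[OF sub] finite_imageI finite_SigmaI) auto
  have ne: "?S \<noteq> {}"
  proof -
    have "replicate m False \<in> vecs m" by (simp add: vecs_def)
    thus ?thesis by blast
  qed
  have hd: "hdist m h (affine_fun m a c) = 0 \<longleftrightarrow> (\<forall>x\<in>vecs m. h x = (c \<noteq> dotp a x))" for a c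
  proof -
    have "finite {x \<in> vecs m. h x \<noteq> affine_fun m a c x}" using finite_vecs by simp
    hence "hdist m h (affine_fun m a c) = 0 \<longleftrightarrow> {x \<in> vecs m. h x \<noteq> affine_fun m a c x} = {}"
      unfolding hdist_def by simp
    also have "\<dots> \<longleftrightarrow> (\<forall>x\<in>vecs m. h x = (c \<noteq> dotp a x))"
      unfolding affine_fun_def by blast
    finally show ?thesis .
  qed
  show ?thesis
  proof
    assume "nl m h = 0"
    hence "0 \<in> ?S" using Min_in[OF fin ne] unfolding nl_def by metis
    then obtain a c where "a \<in> vecs m" "hdist m h (affine_fun m a c) = 0" by force
    thus "\<exists>a c. a \<in> vecs m \<and> (\<forall>x\<in>vecs m. h x = (c \<noteq> dotp a x))" using hd by blast
  next
    assume "\<exists>a c. a \<in> vecs m \<and> (\<forall>x\<in>vecs m. h x = (c \<noteq> dotp a x))"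
    then obtain a c where a: "a \<in> vecs m" and "\<forall>x\<in>vecs m. h x = (c \<noteq> dotp a x)" by blast
    hence "0 = hdist m h (affine_fun m a c)" using hd by simp
    hence "0 \<in> ?S" using a by blast
    hence "Min ?S \<le> 0" using Min_le[OF fin] by blast
    thus "nl m h = 0" unfolding nl_def by simp
  qed
qed

lemma len_nbca[simp]: "length (nbca b f x) = b" by (simp add: nbca_def)

lemma dot_sbox:
  assumes "length v = 2 * b"
  shows "dotp v (sbox b f g x) = (xs b (\<lambda>i. v!i \<and> f (take (b+1) (drop i x)))
      \<noteq> xs b (\<lambda>i. v!(b+i) \<and> g (take (b+1) (drop i x))))"
proof -
  have "dotp v (sbox b f g x) = xs (b + b) (\<lambda>i. v ! i \<and> sbox b f g x ! i)"
    using assms by (simp add: dotp_xs mult_2)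
  also have "\<dots> = (xs b (\<lambda>i. v ! i \<and> sbox b f g x ! i) \<noteq> xs b (\<lambda>i. v ! (b+i) \<and> sbox b f g x ! (b+i)))"
    by (rule xs_add)
  also have "\<dots> = (xs b (\<lambda>i. v!i \<and> f (take (b+1) (drop i x)))
      \<noteq> xs b (\<lambda>i. v!(b+i) \<and> g (take (b+1) (drop i x))))"
    by (intro arg_cong2[where f="(\<noteq>)"] xs_cong) (auto simp: sbox_def nth_append nbca_def)
  finally show ?thesis .
qed

lemma half_right:
  assumes "length x = 2 * Suc n"
    and "\<And>i. i < Suc n \<Longrightarrow> q i = (if i = 0 then False else p (i - 1))" and "\<not> p n"
  shows "xs (Suc n) (\<lambda>i. q i \<and> F (take (Suc n+1) (drop i x)))
       = xs (Suc n) (\<lambda>i. p i \<and> F (take (Suc n+1) (drop i (tl x @ [False]))))"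
proof -
  have "xs (Suc n) (\<lambda>i. q i \<and> F (take (Suc n+1) (drop i x)))
      = xs n (\<lambda>i. q (Suc i) \<and> F (take (Suc n+1) (drop (Suc i) x)))"
    using assms(2)[of 0] by (simp add: xs_shift)
  also have "\<dots> = xs n (\<lambda>i. p i \<and> F (take (Suc n+1) (drop i (tl x @ [False]))))"
  proof (rule xs_cong)
    fix i assume i: "i < n"
    have "drop i (tl x @ [False]) = drop (Suc i) x @ [False]"
      using i assms(1) by (simp add: drop_Suc)
    hence "take (Suc n+1) (drop i (tl x @ [False])) = take (Suc n+1) (drop (Suc i) x)"
      using i assms(1) by simp
    thus "(q (Suc i) \<and> F (take (Suc n+1) (drop (Suc i) x))) = (p i \<and> F (take (Suc n+1) (drop i (tl x @ [False]))))"
      using assms(2)[of "Suc i"] i by simp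
  qed
  also have "\<dots> = xs (Suc n) (\<lambda>i. p i \<and> F (take (Suc n+1) (drop i (tl x @ [False]))))"
    using assms(3) by (simp add: xs_Suc)
  finally show ?thesis .
qed

lemma half_left:
  assumes "length x = 2 * Suc n"
    and "\<And>i. i < n \<Longrightarrow> q i = p (Suc i)" and "\<not> q n" and "\<not> p 0"
  shows "xs (Suc n) (\<lambda>i. q i \<and> F (take (Suc n+1) (drop i x)))
       = xs (Suc n) (\<lambda>i. p i \<and> F (take (Suc n+1) (drop i (False # butlast x))))"
proof -
  have "xs (Suc n) (\<lambda>i. q i \<and> F (take (Suc n+1) (drop i x)))
      = xs n (\<lambda>i. q i \<and> F (take (Suc n+1) (drop i x)))"
    using assms(3) by (simp add: xs_Suc)
  also have "\<dots> = xs n (\<lambda>i. p (Suc i) \<and> F (take (Suc n+1) (drop (Suc i) (False # butlast x))))"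
  proof (rule xs_cong)
    fix i assume i: "i < n"
    have "take (Suc n+1) (drop (Suc i) (False # butlast x)) = take (Suc n+1) (butlast (drop i x))"
      by (simp add: butlast_drop)
    also have "\<dots> = take (Suc n+1) (drop i x)"
      using i assms(1) by (intro take_butlast) simp
    finally show "(q i \<and> F (take (Suc n+1) (drop i x))) = (p (Suc i) \<and> F (take (Suc n+1) (drop (Suc i) (False # butlast x))))"
      using assms(2)[OF i] by simp
  qed
  also have "\<dots> = xs (Suc n) (\<lambda>i. p i \<and> F (take (Suc n+1) (drop i (False # butlast x))))"
    using assms(4) by (simp add: xs_shift)
  finally show ?thesis .
qed

lemma aff_right:
  assumes "length a = Suc k" "length x = Suc k"
  shows "dotp a (tl x @ [False]) = dotp (False # butlast a) x"
proof -
  have "dotp a (tl x @ [False]) = xs k (\<lambda>i. a!i \<and> (tl x @ [False])!i)"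
    using assms by (simp add: dotp_xs xs_Suc nth_append)
  also have "\<dots> = xs k (\<lambda>i. butlast a ! i \<and> x ! Suc i)"
    using assms by (intro xs_cong) (simp add: nth_append nth_tl nth_butlast)
  also have "\<dots> = dotp (False # butlast a) x"
    using assms by (simp add: dotp_xs xs_shift)
  finally show ?thesis .
qed

lemma aff_left:
  assumes "length a = Suc k" "length x = Suc k"
  shows "dotp a (False # butlast x) = dotp (tl a @ [False]) x"
proof -
  have "dotp a (False # butlast x) = xs k (\<lambda>i. a ! Suc i \<and> butlast x ! i)"
    using assms by (simp add: dotp_xs xs_shift)
  also have "\<dots> = xs k (\<lambda>i. (tl a @ [False]) ! i \<and> x ! i)"
    using assms by (intro xs_cong) (simp add: nth_append nth_tl nth_butlast)
  also have "\<dots> = dotp (tl a @ [False]) x"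
    using assms by (simp add: dotp_xs xs_Suc nth_append)
  finally show ?thesis .
qed

theorem lemma3:
  fixes b :: nat and f g :: "bool list \<Rightarrow> bool" and v :: "bool list"
  assumes "b \<ge> 1"
    and "bipermutive (b + 1) f" and "nonlinear (b + 1) f"
    and "bipermutive (b + 1) g" and "nonlinear (b + 1) g"
    and "orthogonal_ca b f g"
    and "v \<in> vecs (2 * b)" and "v \<noteq> replicate (2 * b) False"
    and "nl (2 * b) (\<lambda>x. dotp v (sbox b f g x)) = 0"
  shows "(\<not> v ! (b - 1) \<and> \<not> v ! (2 * b - 1) \<longrightarrow>
            nl (2 * b) (\<lambda>x. dotp (False # butlast v) (sbox b f g x)) = 0)
       \<and> (\<not> v ! 0 \<and> \<not> v ! b \<longrightarrow>
            nl (2 * b) (\<lambda>x. dotp (tl v @ [False]) (sbox b f g x)) = 0)"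
proof -
  obtain n where bn: "b = Suc n" using assms(1) by (cases b) auto
  have lv0: "length v = 2 * b" using assms(7) unfolding vecs_def by blast
  have lv: "length v = 2 * Suc n" using lv0 unfolding bn .
  obtain a c where a: "a \<in> vecs (2 * b)" and ac: "\<forall>x\<in>vecs (2*b). dotp v (sbox b f g x) = (c \<noteq> dotp a x)"
    using nl_zero_iff[of "2*b" "\<lambda>x. dotp v (sbox b f g x)"] assms(9) by auto
  have la: "length a = Suc (Suc (2 * n))" using a bn by (simp add: vecs_def)
  show ?thesis
  proof (intro conjI impI)
    assume h: "\<not> v ! (b - 1) \<and> \<not> v ! (2 * b - 1)"
    hence h1: "\<not> v ! n" and h2: "\<not> v ! (Suc n + n)" using bn by (auto simp: mult_2)
    let ?v = "False # butlast v"
    have lv': "length ?v = 2 * Suc n" using lv by simp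
    have eq: "dotp ?v (sbox b f g x) = dotp v (sbox b f g (tl x @ [False]))" if x: "x \<in> vecs (2*b)" for x
    proof -
      have lx: "length x = 2 * Suc n" using x bn by (simp add: vecs_def)
      have r1: "xs (Suc n) (\<lambda>i. ?v!i \<and> f (take (Suc n+1) (drop i x)))
         = xs (Suc n) (\<lambda>i. v!i \<and> f (take (Suc n+1) (drop i (tl x @ [False]))))"
        by (rule half_right[where p="\<lambda>i. v!i" and q="\<lambda>i. ?v!i" and F=f, OF lx _ h1]) (use lv in \<open>auto simp: nth_butlast split: nat.splits\<close>)
      have r2: "xs (Suc n) (\<lambda>i. ?v!(Suc n + i) \<and> g (take (Suc n+1) (drop i x)))
         = xs (Suc n) (\<lambda>i. v!(Suc n + i) \<and> g (take (Suc n+1) (drop i (tl x @ [False]))))"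
        by (rule half_right[where p="\<lambda>i. v!(Suc n + i)" and q="\<lambda>i. ?v!(Suc n + i)" and F=g, OF lx _ h2]) (use lv h1 in \<open>auto simp: nth_butlast split: nat.splits\<close>)
      show ?thesis unfolding bn dot_sbox[OF lv] dot_sbox[OF lv'] r1 r2 ..
    qed
    show "nl (2 * b) (\<lambda>x. dotp ?v (sbox b f g x)) = 0"
      unfolding nl_zero_iff
    proof (intro exI conjI ballI)
      show "False # butlast a \<in> vecs (2*b)" using la bn by (simp add: vecs_def)
      fix x assume x: "x \<in> vecs (2*b)"
      have lx: "length x = Suc (Suc (2 * n))" using x bn by (simp add: vecs_def)
      have "tl x @ [False] \<in> vecs (2*b)" using lx bn by (simp add: vecs_def)
      thus "dotp ?v (sbox b f g x) = (c \<noteq> dotp (False # butlast a) x)"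
        using eq[OF x] ac aff_right[OF la lx] by simp
    qed
  next
    assume h: "\<not> v ! 0 \<and> \<not> v ! b"
    hence h1: "\<not> v ! 0" and h2: "\<not> v ! (Suc n + 0)" using bn by auto
    let ?v = "tl v @ [False]"
    have lv': "length ?v = 2 * Suc n" using lv by simp
    have eq: "dotp ?v (sbox b f g x) = dotp v (sbox b f g (False # butlast x))" if x: "x \<in> vecs (2*b)" for x
    proof -
      have lx: "length x = 2 * Suc n" using x bn by (simp add: vecs_def)
      have r1: "xs (Suc n) (\<lambda>i. ?v!i \<and> f (take (Suc n+1) (drop i x)))
         = xs (Suc n) (\<lambda>i. v!i \<and> f (take (Suc n+1) (drop i (False # butlast x))))"
        by (rule half_left[where p="\<lambda>i. v!i" and q="\<lambda>i. ?v!i" and F=f, OF lx _ _ h1]) (use lv h2 in \<open>auto simp: nth_append nth_tl\<close>)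
      have r2: "xs (Suc n) (\<lambda>i. ?v!(Suc n + i) \<and> g (take (Suc n+1) (drop i x)))
         = xs (Suc n) (\<lambda>i. v!(Suc n + i) \<and> g (take (Suc n+1) (drop i (False # butlast x))))"
        by (rule half_left[where p="\<lambda>i. v!(Suc n + i)" and q="\<lambda>i. ?v!(Suc n + i)" and F=g, OF lx _ _ h2]) (use lv in \<open>auto simp: nth_append nth_tl\<close>)
      show ?thesis unfolding bn dot_sbox[OF lv] dot_sbox[OF lv'] r1 r2 ..
    qed
    show "nl (2 * b) (\<lambda>x. dotp ?v (sbox b f g x)) = 0"
      unfolding nl_zero_iff
    proof (intro exI conjI ballI)
      show "tl a @ [False] \<in> vecs (2*b)" using la bn by (simp add: vecs_def)
      fix x assume x: "x \<in> vecs (2*b)"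
      have lx: "length x = Suc (Suc (2 * n))" using x bn by (simp add: vecs_def)
      have "False # butlast x \<in> vecs (2*b)" using lx bn by (simp add: vecs_def)
      thus "dotp ?v (sbox b f g x) = (c \<noteq> dotp (tl a @ [False]) x)"
        using eq[OF x] ac aff_left[OF la lx] by simp
    qed
  qed
qed

end
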